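(* Let $q=2$ and $2\leq z\leq 4$. Consider the mean-field equation in $u\in[0,1)$, $$u=\frac{1-\exp(\Delta_{\beta,2,z}(u))}{1+\exp(\Delta_{\beta,2,z}(u))},\qquad\Delta_{\beta,2,z}(u):=-\frac{\beta}{2^{z-1}}\Big[(1+u)^{z-1}-(1-u)^{z-1}\Big].$$ There exists a single $\beta_1(2,z)>0$ such that for $0<\beta\leq\beta_1$ the mean-field equation has only the trivial solution $u=0$, and for $\beta>\beta_1$ it has exactly one additional solution $0<u_1<1$. *)

theory Defs
  imports Complex_Main
begin

definition Delta2 :: "real \<Rightarrow> real \<Rightarrow> real \<Rightarrow> real" where
  "Delta2 \<beta> z u = - (\<beta> / (2 powr (z - 1))) * ((1 + u) powr (z - 1) - (1 - u) powr (z - 1))"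

definition mf_eq2 :: "real \<Rightarrow> real \<Rightarrow> real \<Rightarrow> bool" where
  "mf_eq2 \<beta> z u \<longleftrightarrow> u = (1 - exp (Delta2 \<beta> z u)) / (1 + exp (Delta2 \<beta> z u))"

end

theory Submission
  imports Defs
begin

lemma psi_deriv:
  fixes b x :: real
  assumes "-1 < x" "x < 1"
  shows "((\<lambda>u. (1-u^2) * ((1+u) powr b + (1-u) powr b)) has_real_derivative
     ((1+x) powr b * (b-(b+2)*x) - (1-x) powr b * (b+(b+2)*x))) (at x)"
proof -
  have A: "(1+x) powr (b-1) = (1+x) powr b / (1+x)" using assms by (simp add: powr_diff)
  have B: "(1-x) powr (b-1) = (1-x) powr b / (1-x)" using assms by (simp add: powr_diff)
  have d1: "((\<lambda>u. (1+u) powr b) has_real_derivative b * (1+x) powr (b-1)) (at x)"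
    using assms by (auto intro!: derivative_eq_intros)
  have d2: "((\<lambda>u. (1-u) powr b) has_real_derivative - b * (1-x) powr (b-1)) (at x)"
    using assms by (auto intro!: derivative_eq_intros)
  have d3: "((\<lambda>u. 1-u^2) has_real_derivative -2*x) (at x)"
    by (auto intro!: derivative_eq_intros)
  have D: "((\<lambda>u. (1-u^2) * ((1+u) powr b + (1-u) powr b)) has_real_derivative
     (-2*x) * ((1+x) powr b + (1-x) powr b) + (b * (1+x) powr (b-1) + - b * (1-x) powr (b-1)) * (1-x^2)) (at x)"
    using DERIV_mult[OF d3 DERIV_add[OF d1 d2]] by simp
  moreover have "(-2*x) * ((1+x) powr b + (1-x) powr b) + (b * (1+x) powr (b-1) + - b * (1-x) powr (b-1)) * (1-x^2)
     = (1+x) powr b * (b-(b+2)*x) - (1-x) powr b * (b+(b+2)*x)"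
  proof -
    have A': "(1+x) powr (b-1) * (1-x^2) = (1-x) * (1+x) powr b"
      using assms by (simp add: A power2_eq_square field_simps)
    have B': "(1-x) powr (b-1) * (1-x^2) = (1+x) * (1-x) powr b"
      using assms by (simp add: B power2_eq_square field_simps)
    have "(-2*x) * ((1+x) powr b + (1-x) powr b) + (b * (1+x) powr (b-1) + - b * (1-x) powr (b-1)) * (1-x^2)
      = (-2*x) * ((1+x) powr b + (1-x) powr b) + b * ((1+x) powr (b-1) * (1-x^2)) - b * ((1-x) powr (b-1) * (1-x^2))"
      by (simp add: algebra_simps)
    also have "\<dots> = (1+x) powr b * (b-(b+2)*x) - (1-x) powr b * (b+(b+2)*x)"
      unfolding A' B' by (simp add: algebra_simps)
    finally show ?thesis .
  qed
  ultimately show ?thesis by simp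
qed
lemma L_pos:
  fixes b u :: real
  assumes b: "0 < b" "b \<le> 2" and u: "0 < u" "(b+2)*u < b"
  shows "b*ln(1+u) + ln(b-(b+2)*u) < ln(b+(b+2)*u) + b*ln(1-u)"
proof -
  define L where "L t = ln(b+(b+2)*t) - ln(b-(b+2)*t) - b*ln(1+t) + b*ln(1-t)" for t
  have u1: "u < 1"
  proof -
    have h: "(b+2)*u < b+2" using b u by linarith
    show ?thesis
    proof (rule ccontr)
      assume "\<not> u < 1"
      then have "(b+2)*1 \<le> (b+2)*u" using mult_left_mono[of 1 u "b+2"] b by simp
      then show False using h by simp
    qed
  qed
  have der: "(L has_real_derivative (b+2)/(b+(b+2)*t) + (b+2)/(b-(b+2)*t) - b/(1+t) - b/(1-t)) (at t)"
    if "0 \<le> t" "t \<le> u" for t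
  proof -
    have "(b+2)*t \<le> (b+2)*u" using that b by (intro mult_left_mono) auto
    then have m: "0 < b-(b+2)*t" using u by linarith
    have "0 \<le> (b+2)*t" using that b by simp
    then have p: "0 < b+(b+2)*t" using b by linarith
    have "t < 1" using that u1 by linarith
    then have t1: "0 < 1 - t" "0 < 1 + t" using that by auto
    have l1: "((\<lambda>t. b+(b+2)*t) has_real_derivative (b+2)) (at t)"
      by (auto intro!: derivative_eq_intros)
    have l2: "((\<lambda>t. b-(b+2)*t) has_real_derivative -(b+2)) (at t)"
      by (auto intro!: derivative_eq_intros)
    have l3: "((\<lambda>t. 1+t) has_real_derivative 1) (at t)"
      by (auto intro!: derivative_eq_intros)
    have l4: "((\<lambda>t. 1-t) has_real_derivative -1) (at t)"
      by (auto intro!: derivative_eq_intros)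
    note e1 = DERIV_chain2[OF DERIV_ln_divide[OF p] l1]
    note e2 = DERIV_chain2[OF DERIV_ln_divide[OF m] l2]
    note e3 = DERIV_cmult[OF DERIV_chain2[OF DERIV_ln_divide[OF t1(2)] l3], of b]
    note e4 = DERIV_cmult[OF DERIV_chain2[OF DERIV_ln_divide[OF t1(1)] l4], of b]
    have "(L has_real_derivative 1 / (b + (b + 2) * t) * (b + 2) - 1 / (b - (b + 2) * t) * - (b + 2)
         - b * (1 / (1 + t) * 1) + b * (1 / (1 - t) * - 1)) (at t)"
      unfolding L_def[abs_def] by (intro DERIV_add DERIV_diff e1 e2 e3 e4)
    moreover have "1 / (b + (b + 2) * t) * (b + 2) - 1 / (b - (b + 2) * t) * - (b + 2)
         - b * (1 / (1 + t) * 1) + b * (1 / (1 - t) * - 1) = (b+2)/(b+(b+2)*t) + (b+2)/(b-(b+2)*t) - b/(1+t) - b/(1-t)"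
      using m p t1 by (simp add: field_simps)
    ultimately show ?thesis by (rule DERIV_cong)
  qed
  have pos: "0 < (b+2)/(b+(b+2)*t) + (b+2)/(b-(b+2)*t) - b/(1+t) - b/(1-t)"
    if "0 < t" "t < u" for t
  proof -
    have "(b+2)*t \<le> (b+2)*u" using that b by (intro mult_left_mono) auto
    then have m: "0 < b-(b+2)*t" using u by linarith
    have "0 \<le> (b+2)*t" using that b by simp
    then have p: "0 < b+(b+2)*t" using b by linarith
    have t1: "t < 1" using that u1 by linarith
    have e1: "(b+2)/(b+(b+2)*t) + (b+2)/(b-(b+2)*t) = 2*b*(b+2) / ((b+(b+2)*t)*(b-(b+2)*t))"
      using m p by (simp add: field_simps)
    have nz: "1+t \<noteq> 0" "1-t \<noteq> 0" "b+2 \<noteq> 0" using that t1 b by auto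
    have e2a: "b/(1+t) + b/(1-t) = 2*b / ((1+t)*(1-t))"
      using nz by (simp add: field_simps)
    have e2: "b/(1+t) + b/(1-t) = 2*b*(b+2) / ((b+2)*((1+t)*(1-t)))"
      unfolding e2a using nz by simp
    have key: "(b+(b+2)*t)*(b-(b+2)*t) < (b+2)*((1+t)*(1-t))"
    proof -
      have "(b+2)*((1+t)*(1-t)) - (b+(b+2)*t)*(b-(b+2)*t) = (2-b)*(1+b) + t^2*((b+2)*(b+1))"
        by (simp add: algebra_simps power2_eq_square)
      moreover have "0 \<le> (2-b)*(1+b)" using b by simp
      moreover have "0 < t^2*((b+2)*(b+1))" using that b by simp
      ultimately show ?thesis by linarith
    qed
    have "2*b*(b+2) / ((b+2)*((1+t)*(1-t))) < 2*b*(b+2) / ((b+(b+2)*t)*(b-(b+2)*t))"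
    proof (rule divide_strict_left_mono[OF key])
      show "0 < 2*b*(b+2)" using b by simp
      have pm: "0 < (b+(b+2)*t)*(b-(b+2)*t)" using m p by simp
      have "0 < (b+2)*((1+t)*(1-t))" using b t1 that by simp
      then show "0 < (b+2)*((1+t)*(1-t)) * ((b+(b+2)*t)*(b-(b+2)*t))" using pm by simp
    qed
    then show ?thesis using e1 e2 by linarith
  qed
  have cont: "continuous_on {0..u} L"
    using der by (meson DERIV_isCont continuous_at_imp_continuous_on atLeastAtMost_iff)
  have "L 0 < L u"
  proof (rule DERIV_pos_imp_increasing_open[OF u(1) _ cont])
    fix x assume x: "0 < x" "x < u"
    show "\<exists>y. DERIV L x :> y \<and> y > 0" using der[of x] pos[of x] x by auto
  qed
  moreover have "L 0 = 0" unfolding L_def by simp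
  ultimately show ?thesis unfolding L_def by linarith
qed

lemma Q_neg:
  fixes b x :: real
  assumes b: "0 \<le> b" "b \<le> 2" and x: "0 < x" "x < 1"
  shows "(1+x) powr b * (b-(b+2)*x) - (1-x) powr b * (b+(b+2)*x) < 0"
proof (cases "b-(b+2)*x \<le> 0")
  case True
  have "(1+x) powr b * (b-(b+2)*x) \<le> 0" using True by (simp add: mult_nonneg_nonpos)
  moreover have "0 < (1-x) powr b * (b+(b+2)*x)" using b x by (intro mult_pos_pos add_nonneg_pos) auto
  ultimately show ?thesis by linarith
next
  case False
  then have m: "0 < b-(b+2)*x" by simp
  have b0: "0 < b" using m x b by (cases "b = 0") auto
  have p: "0 < b+(b+2)*x" using b0 x by (simp add: pos_add_strict)
  have "b*ln(1+x) + ln(b-(b+2)*x) < ln(b+(b+2)*x) + b*ln(1-x)"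
    using L_pos[OF b0 b(2) x(1)] m by linarith
  then have "exp (b*ln(1+x) + ln(b-(b+2)*x)) < exp (ln(b+(b+2)*x) + b*ln(1-x))" by simp
  then have "(1+x) powr b * (b-(b+2)*x) < (1-x) powr b * (b+(b+2)*x)"
    using m p x by (simp add: exp_add powr_def mult.commute)
  then show ?thesis by simp
qed

definition phi :: "real \<Rightarrow> real \<Rightarrow> real \<Rightarrow> real" where
  "phi c a u = c * ((1+u) powr a - (1-u) powr a) - ln (1+u) + ln (1-u)"
definition dphi :: "real \<Rightarrow> real \<Rightarrow> real \<Rightarrow> real" where
  "dphi c a x = c * (a * (1+x) powr (a-1) + a * (1-x) powr (a-1)) - 1/(1+x) - 1/(1-x)"
definition psi :: "real \<Rightarrow> real \<Rightarrow> real" where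
  "psi b u = (1-u^2) * ((1+u) powr b + (1-u) powr b)"

lemma phi_deriv:
  assumes "-1 < x" "x < 1"
  shows "(phi c a has_real_derivative dphi c a x) (at x)"
  unfolding phi_def[abs_def] dphi_def
  using assms by (auto intro!: derivative_eq_intros simp: field_simps)

lemma phi_cont:
  assumes "S \<subseteq> {-1<..<1}"
  shows "continuous_on S (phi c a)"
proof -
  have "\<forall>x\<in>S. isCont (phi c a) x"
    using assms phi_deriv by (meson DERIV_isCont greaterThanLessThan_iff subsetD)
  then show ?thesis by (simp add: continuous_at_imp_continuous_on)
qed

lemma phi_diff:
  assumes "-1 < x" "x < 1"
  shows "phi c a differentiable (at x)"
  using phi_deriv[OF assms] real_differentiable_def by blast

lemma one_minus_sq_pos:
  fixes x :: real
  assumes "-1 < x" "x < 1"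
  shows "0 < 1 - x^2"
proof -
  have "0 < (1-x)*(1+x)" using assms by (intro mult_pos_pos) auto
  also have "(1-x)*(1+x) = 1 - x^2" by (simp add: algebra_simps power2_eq_square)
  finally show ?thesis .
qed

lemma dphi_eq:
  assumes "-1 < x" "x < 1"
  shows "dphi c a x = (c*a*psi (a-1) x - 2)/(1-x^2)"
proof -
  have n: "1 - x^2 \<noteq> 0" using one_minus_sq_pos[OF assms] by linarith
  have "(c*a*psi (a-1) x - 2)/(1-x^2) = c*a*((1+x) powr (a-1) + (1-x) powr (a-1)) - 2/(1-x^2)"
    using n unfolding psi_def by (simp add: field_simps)
  moreover have "2/(1-x^2) = 1/(1+x) + 1/(1-x)"
    using assms n by (simp add: field_simps power2_eq_square)
  ultimately show ?thesis unfolding dphi_def by (simp add: algebra_simps)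
qed

lemma psi0: "psi b 0 = 2" unfolding psi_def by simp

lemma psi_deriv':
  assumes "-1 < x" "x < 1"
  shows "(psi b has_real_derivative ((1+x) powr b * (b-(b+2)*x) - (1-x) powr b * (b+(b+2)*x))) (at x)"
  unfolding psi_def[abs_def] by (rule psi_deriv[OF assms])

lemma psi_dec:
  assumes b: "0 \<le> b" "b \<le> 2" and xy: "0 \<le> x" "x < y" "y < 1"
  shows "psi b y < psi b x"
proof -
  have "isCont (psi b) t" if "t \<in> {x..y}" for t
  proof -
    have "-1 < t" "t < 1" using that xy by auto
    then show ?thesis using psi_deriv' DERIV_isCont by blast
  qed
  then have cont: "continuous_on {x..y} (psi b)"
    by (simp add: continuous_at_imp_continuous_on)
  show ?thesis
  proof (rule DERIV_neg_imp_decreasing_open[OF xy(2) _ cont])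
    fix t assume t: "x < t" "t < y"
    have t1: "-1 < t" "t < 1" "0 < t" using t xy by auto
    show "\<exists>d. (psi b has_real_derivative d) (at t) \<and> d < 0"
      using psi_deriv'[OF t1(1,2), of b] Q_neg[OF b t1(3) t1(2)] by blast
  qed
qed

lemma mf_equiv:
  assumes "-1 < u" "u < 1"
  shows "mf_eq2 \<beta> z u \<longleftrightarrow> phi (\<beta> / 2 powr (z-1)) (z-1) u = 0"
proof -
  define D where "D = Delta2 \<beta> z u"
  define e where "e = exp D"
  have e: "0 < e" unfolding e_def by simp
  have "mf_eq2 \<beta> z u \<longleftrightarrow> u = (1-e)/(1+e)" unfolding mf_eq2_def e_def D_def by simp
  also have "\<dots> \<longleftrightarrow> u*(1+e) = 1-e" using e by (simp add: field_simps)
  also have "\<dots> \<longleftrightarrow> e = (1-u)/(1+u)" using assms by (auto simp: field_simps)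
  also have "\<dots> \<longleftrightarrow> D = ln ((1-u)/(1+u))" unfolding e_def using assms
    by (metis divide_pos_pos diff_gt_0_iff_gt exp_ln ln_exp add.commute neg_less_iff_less add_0 diff_minus_eq_add less_add_same_cancel2 minus_diff_eq)
  also have "\<dots> \<longleftrightarrow> D = ln (1-u) - ln (1+u)" using assms by (simp add: ln_div)
  also have "\<dots> \<longleftrightarrow> phi (\<beta> / 2 powr (z-1)) (z-1) u = 0"
    unfolding D_def Delta2_def phi_def by (auto simp: algebra_simps)
  finally show ?thesis .
qed

theorem lemma5p6:
  fixes z :: real
  assumes "2 \<le> z" and "z \<le> 4"
  shows "\<exists>\<beta>1 > 0. \<forall>\<beta> > 0.
           (\<beta> \<le> \<beta>1 \<longrightarrow> {u \<in> {0..<1}. mf_eq2 \<beta> z u} = {0}) \<and>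
           (\<beta>1 < \<beta> \<longrightarrow> (\<exists>!u1. 0 < u1 \<and> u1 < 1 \<and> mf_eq2 \<beta> z u1))"
proof -
  define a where "a = z - 1"
  have a1: "1 \<le> a" "0 \<le> a - 1" "a - 1 \<le> 2" using assms unfolding a_def by auto
  define \<beta>1 where "\<beta>1 = 2 powr a / a"
  have b1: "0 < \<beta>1" unfolding \<beta>1_def using a1 by simp
  have mf: "mf_eq2 \<beta> z u \<longleftrightarrow> phi (\<beta> / 2 powr a) a u = 0" if "-1 < u" "u < 1" for \<beta> u
    using mf_equiv[OF that] unfolding a_def by simp
  have phi0: "phi c a 0 = 0" for c unfolding phi_def by simp
  show ?thesis
  proof (intro exI[of _ \<beta>1] conjI b1 allI impI)
    fix \<beta> :: real assume \<beta>: "0 < \<beta>"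
    define c where "c = \<beta> / 2 powr a"
    have c: "0 < c" unfolding c_def using \<beta> by simp
    have ca: "c * a = \<beta> / \<beta>1" unfolding c_def \<beta>1_def using a1 by (simp add: field_simps)
    have ca0: "0 < c * a" using c a1 by simp
    {
      assume le: "\<beta> \<le> \<beta>1"
      have ca1: "c * a \<le> 1" using ca le b1 by (simp add: divide_le_eq_1)
      have neg: "phi c a u < 0" if u: "0 < u" "u < 1" for u
      proof -
        have "phi c a u < phi c a 0"
          using u(1) _ phi_cont[of "{0..u}" c a]
        proof (rule DERIV_neg_imp_decreasing_open)
          fix t assume t: "0 < t" "t < u"
          have pl: "psi (a-1) t < psi (a-1) 0" using psi_dec[of "a-1" 0 t] a1 t u by simp
          have "c*a*psi (a-1) t < c*a*2" using mult_strict_left_mono[OF pl ca0] psi0 by simp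
          then have "c*a*psi (a-1) t - 2 < 0" using ca1 by linarith
          moreover have "0 < 1 - t^2" using t u one_minus_sq_pos[of t] by simp
          ultimately have "dphi c a t < 0" using dphi_eq[of t c a] t u by (simp add: divide_neg_pos)
          then show "\<exists>y. (phi c a has_real_derivative y) (at t) \<and> y < 0"
            using phi_deriv[of t c a] t u by auto
        qed (use u in auto)
        then show ?thesis using phi0 by simp
      qed
      show "{u \<in> {0..<1}. mf_eq2 \<beta> z u} = {0}"
      proof safe
        fix u assume u: "u \<in> {0..<1}" "mf_eq2 \<beta> z u"
        show "u = 0"
        proof (rule ccontr)
          assume "u \<noteq> 0"
          then have "0 < u" "u < 1" using u by auto
          then show False using neg[of u] mf[of u \<beta>] u unfolding c_def by auto
        qed
      next
        show "mf_eq2 \<beta> z 0" using mf[of 0 \<beta>] phi0 by simp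
      qed simp
    }
    {
      assume gt: "\<beta>1 < \<beta>"
      have ca1: "1 < c * a" using ca gt b1 by simp
      have d0: "0 < dphi c a 0" using dphi_eq[of 0 c a] ca1 psi0 by simp
      obtain d where d: "d > 0" "\<And>h. h > 0 \<Longrightarrow> h < d \<Longrightarrow> phi c a 0 < phi c a (0 + h)"
        using DERIV_pos_inc_right[OF phi_deriv[of 0 c a] d0] by auto
      define h where "h = min (d/2) (1/2)"
      have h: "0 < h" "h < 1" "phi c a h > 0" using d phi0 unfolding h_def by auto
      define v where "v = 1 - exp (-(\<beta>+1))"
      have v: "0 < v" "v < 1" unfolding v_def using \<beta> by auto
      have "phi c a v \<le> -1"
      proof -
        have "(1+v) powr a \<le> 2 powr a" using v a1 by (intro powr_mono2) auto
        then have "c * (1+v) powr a \<le> \<beta>" using c unfolding c_def by (simp add: field_simps)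
        moreover have "0 \<le> c * (1-v) powr a" using c by simp
        moreover have "0 \<le> ln (1+v)" using v by simp
        moreover have "ln (1-v) = -(\<beta>+1)" unfolding v_def by simp
        ultimately show ?thesis unfolding phi_def by (simp add: algebra_simps)
      qed
      have ex: "\<exists>r. 0 < r \<and> r < 1 \<and> phi c a r = 0"
      proof (cases "h \<le> v")
        case True
        have sub: "{h..v} \<subseteq> {-1<..<1}" using h v by auto
        obtain r where "h \<le> r" "r \<le> v" "phi c a r = 0"
          using IVT2'[of "phi c a" v 0 h] True h v \<open>phi c a v \<le> -1\<close> phi_cont[OF sub] by auto
        then show ?thesis using h v by (intro exI[of _ r]) auto
      next
        case False
        have sub: "{v..h} \<subseteq> {-1<..<1}" using h v by auto
        obtain r where "v \<le> r" "r \<le> h" "phi c a r = 0"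
          using IVT'[of "phi c a" v 0 h] False h v \<open>phi c a v \<le> -1\<close> phi_cont[OF sub] by auto
        then show ?thesis using h v by (intro exI[of _ r]) auto
      qed
      have crit: "c*a*psi (a-1) \<xi> = 2" if "0 < \<xi>" "\<xi> < 1" "DERIV (phi c a) \<xi> :> 0" for \<xi>
      proof -
        have "dphi c a \<xi> = 0" using DERIV_unique[OF phi_deriv[of \<xi> c a] that(3)] that by auto
        moreover have "0 < 1 - \<xi>^2" using that one_minus_sq_pos[of \<xi>] by simp
        ultimately show ?thesis using dphi_eq[of \<xi> c a] that by simp
      qed
      have uniq: "r1 = r2" if r: "0 < r1" "r1 < r2" "r2 < 1" "phi c a r1 = 0" "phi c a r2 = 0" for r1 r2
      proof -
        have s1: "{0..r1} \<subseteq> {-1<..<1}" "{r1..r2} \<subseteq> {-1<..<1}" using r by auto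
        have dd: "phi c a differentiable (at x)" if "0 < x" "x < 1" for x using phi_diff that by simp
        obtain \<xi>1 where x1: "0 < \<xi>1" "\<xi>1 < r1" "DERIV (phi c a) \<xi>1 :> 0"
          using Rolle[of 0 r1 "phi c a"] r phi0 phi_cont[OF s1(1)] dd by auto
        obtain \<xi>2 where x2: "r1 < \<xi>2" "\<xi>2 < r2" "DERIV (phi c a) \<xi>2 :> 0"
          using Rolle[of r1 r2 "phi c a"] r phi_cont[OF s1(2)] dd by auto
        have pp: "psi (a-1) \<xi>2 < psi (a-1) \<xi>1" using psi_dec[of "a-1" \<xi>1 \<xi>2] a1 x1 x2 r by simp
        moreover have "c*a*psi (a-1) \<xi>1 = 2" "c*a*psi (a-1) \<xi>2 = 2"
          using crit x1 x2 r by auto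
        ultimately show ?thesis using mult_strict_left_mono[OF pp ca0] by simp
      qed
      show "\<exists>!u1. 0 < u1 \<and> u1 < 1 \<and> mf_eq2 \<beta> z u1"
      proof -
        have e: "mf_eq2 \<beta> z u \<longleftrightarrow> phi c a u = 0" if "0 < u" "u < 1" for u
          using mf[of u \<beta>] that unfolding c_def by auto
        obtain r where r: "0 < r" "r < 1" "phi c a r = 0" using ex by auto
        show ?thesis
        proof (rule ex1I[of _ r])
          show "0 < r \<and> r < 1 \<and> mf_eq2 \<beta> z r" using r e by auto
        next
          fix y assume y: "0 < y \<and> y < 1 \<and> mf_eq2 \<beta> z y"
          then have py: "phi c a y = 0" using e by auto
          show "y = r"
          proof (cases y r rule: linorder_cases)
            case less
            then show ?thesis using uniq[of y r] y r py by blast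
          next
            case greater
            then show ?thesis using uniq[of r y] y r py by blast
          qed

        qed
      qed
    }
  qed
qed

end
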